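(* Let $S$ be an inverse semigroup, regarded as an algebraic structure in the language $\mathcal{L}=\{\cdot,{}^{-1}\}\cup\{s\mid s\in S\}$. If $S$ is an equational domain in the language $\mathcal{L}$, then $S$ is a group.
   Context: A semigroup $S$ is inverse if for every $s\in S$ there is a unique $s^{-1}\in S$ with $ss^{-1}s=s$ and $s^{-1}ss^{-1}=s^{-1}$. The language $\mathcal{L}$ consists of multiplication, the unary operation $s\mapsto s^{-1}$, and a constant symbol for every element of $S$ (interpreted as that element). For a finite set of variables $X=\{x_1,\dots,x_n\}$, a term of $\mathcal{L}$ is a finite product of variables raised to integer powers (negative powers meaning powers of the inverse) and constants from $S$. An equation is an equality $t(X)=s(X)$ of two terms; a system of equations is an arbitrary (possibly infinite) set of equations in $x_1,\dots,x_n$. The solution set in $S$ of a system $\mathbf{S}$ is the set of tuples in $S^n$ satisfying all its equations. A set $Y\subseteq S^n$ is algebraic over $S$ if it is the solution set of some system of equations in $x_1,\dots,x_n$. $S$ is an equational domain (in $\mathcal{L}$) if for every $n$, every finite union $Y_1\cup\dots\cup Y_k$ of algebraic sets $Y_i\subseteq S^n$ is algebraic. *)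

theory Defs
  imports Main
begin

text \<open>Terms of the language L = {mult, inv} plus a constant for every element of S.
  Variables are indexed by natural numbers; Var i stands for x_(i+1).\<close>
datatype 'a sterm = Var nat | Const 'a | Mul "'a sterm" "'a sterm" | Inv "'a sterm"

fun term_vars :: "'a sterm \<Rightarrow> nat set" where
  "term_vars (Var i) = {i}"
| "term_vars (Const c) = {}"
| "term_vars (Mul t u) = term_vars t \<union> term_vars u"
| "term_vars (Inv t) = term_vars t"

fun eval_term :: "('a \<Rightarrow> 'a \<Rightarrow> 'a) \<Rightarrow> ('a \<Rightarrow> 'a) \<Rightarrow> 'a list \<Rightarrow> 'a sterm \<Rightarrow> 'a" where
  "eval_term m iv p (Var i) = p ! i"
| "eval_term m iv p (Const c) = c"
| "eval_term m iv p (Mul t u) = m (eval_term m iv p t) (eval_term m iv p u)"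
| "eval_term m iv p (Inv t) = iv (eval_term m iv p t)"

definition inverse_semigroup :: "('a \<Rightarrow> 'a \<Rightarrow> 'a) \<Rightarrow> ('a \<Rightarrow> 'a) \<Rightarrow> bool" where
  "inverse_semigroup m iv \<longleftrightarrow>
     (\<forall>x y z. m (m x y) z = m x (m y z)) \<and>
     (\<forall>s. m (m s (iv s)) s = s \<and> m (m (iv s) s) (iv s) = iv s) \<and>
     (\<forall>s t. m (m s t) s = s \<and> m (m t s) t = t \<longrightarrow> t = iv s)"

definition solution_set :: "('a \<Rightarrow> 'a \<Rightarrow> 'a) \<Rightarrow> ('a \<Rightarrow> 'a) \<Rightarrow> nat \<Rightarrow> ('a sterm \<times> 'a sterm) set \<Rightarrow> 'a list set" where
  "solution_set m iv n E =
     {p. length p = n \<and> (\<forall>(t, u) \<in> E. eval_term m iv p t = eval_term m iv p u)}"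

definition algebraic_set :: "('a \<Rightarrow> 'a \<Rightarrow> 'a) \<Rightarrow> ('a \<Rightarrow> 'a) \<Rightarrow> nat \<Rightarrow> 'a list set \<Rightarrow> bool" where
  "algebraic_set m iv n Y \<longleftrightarrow>
     (\<exists>E. (\<forall>(t, u) \<in> E. term_vars t \<subseteq> {..<n} \<and> term_vars u \<subseteq> {..<n}) \<and>
          Y = solution_set m iv n E)"

definition equational_domain :: "('a \<Rightarrow> 'a \<Rightarrow> 'a) \<Rightarrow> ('a \<Rightarrow> 'a) \<Rightarrow> bool" where
  "equational_domain m iv \<longleftrightarrow>
     (\<forall>n \<YY>. finite \<YY> \<and> \<YY> \<noteq> {} \<and> (\<forall>Y \<in> \<YY>. algebraic_set m iv n Y)
            \<longrightarrow> algebraic_set m iv n (\<Union>\<YY>))"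

definition is_group :: "('a \<Rightarrow> 'a \<Rightarrow> 'a) \<Rightarrow> bool" where
  "is_group m \<longleftrightarrow>
     (\<forall>x y z. m (m x y) z = m x (m y z)) \<and>
     (\<exists>e. \<forall>x. m e x = x \<and> m x e = x \<and> (\<exists>y. m x y = e \<and> m y x = e))"

end

theory Submission
  imports Defs
begin

locale invs =
  fixes m :: "'a \<Rightarrow> 'a \<Rightarrow> 'a" (infixl "\<odot>" 70) and iv :: "'a \<Rightarrow> 'a"
  assumes isg: "inverse_semigroup m iv"
begin

lemma ext_r: "a = c \<Longrightarrow> a \<odot> z = c \<odot> z"
  by simp

lemma assoc[simp]: "(x \<odot> y) \<odot> z = x \<odot> (y \<odot> z)"
  using isg unfolding inverse_semigroup_def by blast

lemma inv1[simp]: "s \<odot> (iv s \<odot> s) = s"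
  using isg unfolding inverse_semigroup_def by simp

lemma inv2[simp]: "iv s \<odot> (s \<odot> iv s) = iv s"
  using isg unfolding inverse_semigroup_def by simp

lemma inv1'[simp]: "s \<odot> (iv s \<odot> (s \<odot> x)) = s \<odot> x"
  using ext_r[OF inv1[of s], of x] by (simp del: inv1)

lemma inv2'[simp]: "iv s \<odot> (s \<odot> (iv s \<odot> x)) = iv s \<odot> x"
  using ext_r[OF inv2[of s], of x] by (simp del: inv2)

lemma idm': "a \<odot> a = a \<Longrightarrow> a \<odot> (a \<odot> x) = a \<odot> x"
  by (drule ext_r[of _ _ x]) simp

lemma uniq: "s \<odot> (t \<odot> s) = s \<Longrightarrow> t \<odot> (s \<odot> t) = t \<Longrightarrow> t = iv s"
  using isg unfolding inverse_semigroup_def by simp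

lemma iv_iv[simp]: "iv (iv s) = s"
  by (rule uniq[symmetric]) simp_all

lemma idem_iv: "e \<odot> e = e \<Longrightarrow> iv e = e"
  by (rule uniq[symmetric]) (simp_all add: idm')

lemma idem_mult:
  assumes e: "e \<odot> e = e" and f: "f \<odot> f = f"
  shows "(e \<odot> f) \<odot> (e \<odot> f) = e \<odot> f"
proof -
  define x where "x = iv (e \<odot> f)"
  have x1: "e \<odot> (f \<odot> (x \<odot> (e \<odot> f))) = e \<odot> f" unfolding x_def using inv1[of "e \<odot> f"] by (simp del: inv1 inv1')
  have x2: "x \<odot> (e \<odot> (f \<odot> x)) = x" unfolding x_def using inv2[of "e \<odot> f"] by simp
  have x2': "x \<odot> (e \<odot> (f \<odot> (x \<odot> z))) = x \<odot> z" for z using ext_r[OF x2, of z] by simp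
  define y where "y = f \<odot> (x \<odot> e)"
  have y1: "(e \<odot> f) \<odot> (y \<odot> (e \<odot> f)) = e \<odot> f"
    unfolding y_def using x1 by (simp add: idm'[OF e] idm'[OF f])
  have y2: "y \<odot> ((e \<odot> f) \<odot> y) = y"
    unfolding y_def by (simp only: assoc idm'[OF e] idm'[OF f] x2')
  have yx: "y = x" using uniq[OF y1 y2] x_def by simp
  have "x \<odot> x = y \<odot> y" using yx by simp
  also have "\<dots> = y" unfolding y_def using x2' by simp
  finally have xx: "x \<odot> x = x" using yx by simp
  hence "iv x = x" by (rule idem_iv)
  hence "e \<odot> f = x" unfolding x_def by (metis iv_iv)
  thus ?thesis using xx by simp
qed

lemma idem_comm:
  assumes e: "e \<odot> e = e" and f: "f \<odot> f = f"
  shows "e \<odot> f = f \<odot> e"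
proof -
  have ef: "(e \<odot> f) \<odot> (e \<odot> f) = e \<odot> f" by (rule idem_mult[OF e f])
  have fe: "(f \<odot> e) \<odot> (f \<odot> e) = f \<odot> e" by (rule idem_mult[OF f e])
    have a: "(e \<odot> f) \<odot> ((f \<odot> e) \<odot> (e \<odot> f)) = e \<odot> f"
    using ef by (simp add: idm'[OF e] idm'[OF f])
  have b: "(f \<odot> e) \<odot> ((e \<odot> f) \<odot> (f \<odot> e)) = f \<odot> e"
    using fe by (simp add: idm'[OF e] idm'[OF f])
  have "f \<odot> e = iv (e \<odot> f)" by (rule uniq[OF a b])
  also have "\<dots> = e \<odot> f" by (rule idem_iv[OF ef])
  finally show ?thesis by simp
qed

lemma idem_r: "(s \<odot> iv s) \<odot> (s \<odot> iv s) = s \<odot> iv s"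
  by simp

lemma idem_l: "(iv s \<odot> s) \<odot> (iv s \<odot> s) = iv s \<odot> s"
  by simp

lemma comm_idem: "a \<odot> a = a \<Longrightarrow> b \<odot> b = b \<Longrightarrow> a \<odot> (b \<odot> x) = b \<odot> (a \<odot> x)"
  using ext_r[OF idem_comm[of a b], of x] by simp

lemma comm_r: "a \<odot> a = a \<Longrightarrow> s \<odot> (iv s \<odot> (a \<odot> x)) = a \<odot> (s \<odot> (iv s \<odot> x))"
  using comm_idem[OF idem_r[of s], of a x] by (simp only: assoc)

lemma comm_l: "a \<odot> a = a \<Longrightarrow> iv s \<odot> (s \<odot> (a \<odot> x)) = a \<odot> (iv s \<odot> (s \<odot> x))"
  using comm_idem[OF idem_l[of s], of a x] by (simp only: assoc)

lemma iv_mult: "iv (a \<odot> b) = iv b \<odot> iv a"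
proof (rule uniq[symmetric])
  show "(a \<odot> b) \<odot> ((iv b \<odot> iv a) \<odot> (a \<odot> b)) = a \<odot> b"
    using comm_r[OF idem_l[of a], of b b] by simp
  show "(iv b \<odot> iv a) \<odot> ((a \<odot> b) \<odot> (iv b \<odot> iv a)) = iv b \<odot> iv a"
    using comm_r[OF idem_l[of a], of b "iv a"] by simp
qed

definition cj where "cj P a = iv P \<odot> (a \<odot> P)"

lemma cj_move: assumes "a \<odot> a = a" shows "a \<odot> P = P \<odot> cj P a"
  unfolding cj_def by (simp only: comm_r[OF assms] inv1)

lemma cj_mult: assumes "a \<odot> a = a" shows "cj P a \<odot> cj P b = cj P (a \<odot> b)"
  unfolding cj_def by (simp only: assoc comm_r[OF assms, symmetric] inv2')

lemma cj_idem: assumes "a \<odot> a = a" shows "cj P a \<odot> cj P a = cj P a"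
proof -
  have "cj P a \<odot> cj P a = cj P (a \<odot> a)" by (rule cj_mult[OF assms])
  thus ?thesis using assms by simp
qed

lemma key:
  assumes e: "e \<odot> e = e" and f: "f \<odot> f = f" and ef: "e \<odot> f = f"
    and tv: "term_vars t \<subseteq> {0, Suc 0}"
  shows "\<exists>\<alpha> \<beta>. \<alpha> \<odot> \<alpha> = \<alpha> \<and> \<beta> \<odot> \<beta> = \<beta> \<and>
     eval_term m iv [e, f] t = eval_term m iv [e, e] t \<odot> \<alpha> \<and>
     eval_term m iv [f, e] t = eval_term m iv [e, e] t \<odot> \<beta> \<and>
     eval_term m iv [f, f] t = eval_term m iv [e, e] t \<odot> (\<alpha> \<odot> \<beta>)"
  using tv
proof (induction t)
  case (Var i)
  have fe: "f \<odot> e = f" using idem_comm[OF e f] ef by simp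
  from Var have "i = 0 \<or> i = 1" by auto
  thus ?case
  proof
    assume "i = 0"
    thus ?thesis by (intro exI[of _ e] exI[of _ f]) (simp add: e f ef idm'[OF e])
  next
    assume "i = 1"
    thus ?thesis by (intro exI[of _ f] exI[of _ e]) (simp add: e f ef fe)
  qed
next
  case (Const c)
  show ?case
    by (intro exI[of _ "iv c \<odot> c"] exI[of _ "iv c \<odot> c"]) simp
next
  case (Mul t u)
  then obtain a1 b1 a2 b2 where h1: "a1 \<odot> a1 = a1" "b1 \<odot> b1 = b1"
     "eval_term m iv [e, f] t = eval_term m iv [e, e] t \<odot> a1"
     "eval_term m iv [f, e] t = eval_term m iv [e, e] t \<odot> b1"
     "eval_term m iv [f, f] t = eval_term m iv [e, e] t \<odot> (a1 \<odot> b1)"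
    and h2: "a2 \<odot> a2 = a2" "b2 \<odot> b2 = b2"
     "eval_term m iv [e, f] u = eval_term m iv [e, e] u \<odot> a2"
     "eval_term m iv [f, e] u = eval_term m iv [e, e] u \<odot> b2"
     "eval_term m iv [f, f] u = eval_term m iv [e, e] u \<odot> (a2 \<odot> b2)"
    by auto
  let ?P2 = "eval_term m iv [e, e] u"
  define g where "g = cj ?P2 a1"
  define d where "d = cj ?P2 b1"
  have g: "g \<odot> g = g" unfolding g_def by (rule cj_idem[OF h1(1)])
  have d: "d \<odot> d = d" unfolding d_def by (rule cj_idem[OF h1(2)])
  have mg: "a1 \<odot> (?P2 \<odot> z) = ?P2 \<odot> (g \<odot> z)" for z
    using ext_r[OF cj_move[OF h1(1), of ?P2], of z] unfolding g_def by (simp only: assoc)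
  have md: "b1 \<odot> (?P2 \<odot> z) = ?P2 \<odot> (d \<odot> z)" for z
    using ext_r[OF cj_move[OF h1(2), of ?P2], of z] unfolding d_def by (simp only: assoc)
  have cd: "a2 \<odot> (d \<odot> z) = d \<odot> (a2 \<odot> z)" for z
    by (rule comm_idem[OF h2(1) d])
  show ?case
  proof (intro exI conjI)
    show "(g \<odot> a2) \<odot> (g \<odot> a2) = g \<odot> a2" by (rule idem_mult[OF g h2(1)])
    show "(d \<odot> b2) \<odot> (d \<odot> b2) = d \<odot> b2" by (rule idem_mult[OF d h2(2)])
    show "eval_term m iv [e, f] (Mul t u) = eval_term m iv [e, e] (Mul t u) \<odot> (g \<odot> a2)"
      by (simp only: eval_term.simps h1(3) h2(3) assoc mg)
    show "eval_term m iv [f, e] (Mul t u) = eval_term m iv [e, e] (Mul t u) \<odot> (d \<odot> b2)"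
      by (simp only: eval_term.simps h1(4) h2(4) assoc md)
    show "eval_term m iv [f, f] (Mul t u) = eval_term m iv [e, e] (Mul t u) \<odot> ((g \<odot> a2) \<odot> (d \<odot> b2))"
      by (simp only: eval_term.simps h1(5) h2(5) assoc md mg cd)
  qed
next
  case (Inv t)
  then obtain a1 b1 where h1: "a1 \<odot> a1 = a1" "b1 \<odot> b1 = b1"
     "eval_term m iv [e, f] t = eval_term m iv [e, e] t \<odot> a1"
     "eval_term m iv [f, e] t = eval_term m iv [e, e] t \<odot> b1"
     "eval_term m iv [f, f] t = eval_term m iv [e, e] t \<odot> (a1 \<odot> b1)"
    by auto
  let ?Q = "eval_term m iv [e, e] t"
  have ia: "iv a1 = a1" by (rule idem_iv[OF h1(1)])
  have ib: "iv b1 = b1" by (rule idem_iv[OF h1(2)])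
  show ?case
  proof (intro exI conjI)
    show "cj (iv ?Q) a1 \<odot> cj (iv ?Q) a1 = cj (iv ?Q) a1" by (rule cj_idem[OF h1(1)])
    show "cj (iv ?Q) b1 \<odot> cj (iv ?Q) b1 = cj (iv ?Q) b1" by (rule cj_idem[OF h1(2)])
    show "eval_term m iv [e, f] (Inv t) = eval_term m iv [e, e] (Inv t) \<odot> cj (iv ?Q) a1"
      by (simp only: eval_term.simps h1(3) iv_mult ia cj_move[OF h1(1), of "iv ?Q", symmetric])
    show "eval_term m iv [f, e] (Inv t) = eval_term m iv [e, e] (Inv t) \<odot> cj (iv ?Q) b1"
      by (simp only: eval_term.simps h1(4) iv_mult ib cj_move[OF h1(2), of "iv ?Q", symmetric])
    have "eval_term m iv [f, f] (Inv t) = iv (?Q \<odot> (a1 \<odot> b1))"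
      by (simp only: eval_term.simps h1(5))
    also have "\<dots> = (a1 \<odot> b1) \<odot> iv ?Q"
      by (simp only: iv_mult ia ib idem_comm[OF h1(2) h1(1)])
    also have "\<dots> = iv ?Q \<odot> cj (iv ?Q) (a1 \<odot> b1)"
      by (rule cj_move[OF idem_mult[OF h1(1,2)]])
    also have "\<dots> = iv ?Q \<odot> (cj (iv ?Q) a1 \<odot> cj (iv ?Q) b1)"
      by (simp only: cj_mult[OF h1(1)])
    finally show "eval_term m iv [f, f] (Inv t) = eval_term m iv [e, e] (Inv t) \<odot> (cj (iv ?Q) a1 \<odot> cj (iv ?Q) b1)"
      by (simp only: eval_term.simps)
  qed
qed

lemma key2:
  assumes e: "e \<odot> e = e" and f: "f \<odot> f = f" and ef: "e \<odot> f = f"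
    and tv: "term_vars t \<subseteq> {0, Suc 0}"
  shows "eval_term m iv [f, f] t = eval_term m iv [e, f] t \<odot> (iv (eval_term m iv [f, e] t) \<odot> eval_term m iv [f, e] t)"
proof -
  obtain a b where h: "a \<odot> a = a" "b \<odot> b = b"
     "eval_term m iv [e, f] t = eval_term m iv [e, e] t \<odot> a"
     "eval_term m iv [f, e] t = eval_term m iv [e, e] t \<odot> b"
     "eval_term m iv [f, f] t = eval_term m iv [e, e] t \<odot> (a \<odot> b)"
    using key[OF e f ef tv] by blast
  let ?P = "eval_term m iv [e, e] t"
  have ib: "iv b = b" by (rule idem_iv[OF h(2)])
  have c1: "b \<odot> (iv ?P \<odot> ?P) = (iv ?P \<odot> ?P) \<odot> b" by (rule idem_comm[OF h(2) idem_l])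
  have c2: "(a \<odot> b) \<odot> (iv ?P \<odot> ?P) = (iv ?P \<odot> ?P) \<odot> (a \<odot> b)"
    by (rule idem_comm[OF idem_mult[OF h(1,2)] idem_l])
  have s1: "b \<odot> (iv ?P \<odot> (?P \<odot> b)) = iv ?P \<odot> (?P \<odot> (b \<odot> b))"
    using ext_r[OF c1, of b] by (simp only: assoc)
  have s3: "iv ?P \<odot> (?P \<odot> b) = b \<odot> (iv ?P \<odot> ?P)"
    using c1 by (simp only: assoc)
  have s: "b \<odot> (iv ?P \<odot> (?P \<odot> b)) = b \<odot> (iv ?P \<odot> ?P)"
    using s1 s3 h(2) by simp
  have s': "a \<odot> (b \<odot> (iv ?P \<odot> ?P)) = iv ?P \<odot> (?P \<odot> (a \<odot> b))"
    using c2 by (simp only: assoc)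
  have "eval_term m iv [e, f] t \<odot> (iv (eval_term m iv [f, e] t) \<odot> eval_term m iv [f, e] t)
      = ?P \<odot> (a \<odot> b)"
    by (simp only: h(3) h(4) iv_mult ib assoc s s' inv1')
  thus ?thesis using h(5) by simp
qed

lemma two_idems:
  assumes "\<not> is_group m"
  shows "\<exists>e f. e \<odot> e = e \<and> f \<odot> f = f \<and> e \<odot> f = f \<and> e \<noteq> f"
proof (rule ccontr)
  assume na: "\<not> ?thesis"
  have uni: "a = b" if "a \<odot> a = a" "b \<odot> b = b" for a b
  proof (rule ccontr)
    assume ab: "a \<noteq> b"
    have ab2: "(a \<odot> b) \<odot> (a \<odot> b) = a \<odot> b" by (rule idem_mult[OF that])
    have c: "a \<odot> b = b \<odot> a" by (rule idem_comm[OF that])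
    show False
    proof (cases "a = a \<odot> b")
      case True
      hence "b \<odot> b = b \<and> (a \<odot> b) \<odot> (a \<odot> b) = a \<odot> b \<and> b \<odot> (a \<odot> b) = a \<odot> b \<and> b \<noteq> a \<odot> b"
        using ab that c by (simp add: idm')
      thus False using na by blast
    next
      case False
      hence "a \<odot> a = a \<and> (a \<odot> b) \<odot> (a \<odot> b) = a \<odot> b \<and> a \<odot> (a \<odot> b) = a \<odot> b \<and> a \<noteq> a \<odot> b"
        using that ab2 by (simp add: idm')
      thus False using na by blast
    qed
  qed
  define e0 where "e0 = undefined \<odot> iv undefined"
  have r: "x \<odot> iv x = e0" for x unfolding e0_def by (rule uni) simp_all
  have l: "iv x \<odot> x = e0" for x unfolding e0_def by (rule uni) simp_all
  have "\<forall>x. m e0 x = x \<and> m x e0 = x \<and> (\<exists>y. m x y = e0 \<and> m y x = e0)"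
  proof
    fix x
    have "e0 \<odot> x = x" using r[of x, symmetric] by simp
    moreover have "x \<odot> e0 = x" using l[of x, symmetric] by simp
    ultimately show "m e0 x = x \<and> m x e0 = x \<and> (\<exists>y. m x y = e0 \<and> m y x = e0)" using r l by blast
  qed
  hence "is_group m" unfolding is_group_def by auto
  thus False using assms by simp
qed

lemma no_ed:
  assumes e: "e \<odot> e = e" and f: "f \<odot> f = f" and ef: "e \<odot> f = f" and ne: "e \<noteq> f"
  shows "\<not> equational_domain m iv"
proof
  assume ed: "equational_domain m iv"
  define Y1 where "Y1 = solution_set m iv 2 {(Var 0, Const e)}"
  define Y2 where "Y2 = solution_set m iv 2 {(Var 1, Const e)}"
  have a1: "algebraic_set m iv 2 Y1" unfolding algebraic_set_def Y1_def by (intro exI[of _ "{(Var 0, Const e)}"]) auto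
  have a2: "algebraic_set m iv 2 Y2" unfolding algebraic_set_def Y2_def by (intro exI[of _ "{(Var 1, Const e)}"]) auto
  have "algebraic_set m iv 2 (\<Union>{Y1, Y2})"
    using ed a1 a2 unfolding equational_domain_def by (metis empty_iff finite.emptyI finite.insertI insert_iff insert_not_empty)
  then obtain E where Ev: "\<forall>(t, u)\<in>E. term_vars t \<subseteq> {..<2} \<and> term_vars u \<subseteq> {..<2}"
    and EY: "Y1 \<union> Y2 = solution_set m iv 2 E"
    unfolding algebraic_set_def by auto
  have p1: "[e, f] \<in> solution_set m iv 2 E" using EY[symmetric] unfolding Y1_def solution_set_def by auto
  have p2: "[f, e] \<in> solution_set m iv 2 E" using EY[symmetric] unfolding Y2_def solution_set_def by auto
  have lt2: "{..<2::nat} = {0, Suc 0}" by auto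
  have "[f, f] \<in> solution_set m iv 2 E"
    unfolding solution_set_def
  proof (safe)
    show "length [f, f] = 2" by simp
  next
    fix t u assume tu: "(t, u) \<in> E"
    have tv: "term_vars t \<subseteq> {0, Suc 0}" "term_vars u \<subseteq> {0, Suc 0}" using Ev tu lt2 by auto
    have q1: "eval_term m iv [e, f] t = eval_term m iv [e, f] u" using p1 tu unfolding solution_set_def by auto
    have q2: "eval_term m iv [f, e] t = eval_term m iv [f, e] u" using p2 tu unfolding solution_set_def by auto
    show "eval_term m iv [f, f] t = eval_term m iv [f, f] u"
      using key2[OF e f ef tv(1)] key2[OF e f ef tv(2)] q1 q2 by simp
  qed
  hence "[f, f] \<in> Y1 \<union> Y2" using EY by simp
  thus False using ne unfolding Y1_def Y2_def solution_set_def by auto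
qed

end

theorem theorem3:
  fixes m :: "'a \<Rightarrow> 'a \<Rightarrow> 'a" and iv :: "'a \<Rightarrow> 'a"
  assumes "inverse_semigroup m iv"
    and "equational_domain m iv"
  shows "is_group m"
proof (rule ccontr)
  interpret invs m iv by unfold_locales (rule assms(1))
  assume "\<not> is_group m"
  then obtain e f where "m e e = e" "m f f = f" "m e f = f" "e \<noteq> f" using two_idems by blast
  thus False using no_ed assms(2) by blast
qed

end
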